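(* For every $\mu\in\mathcal P(\mathcal X)$ and $\varepsilon>0$ there exists $\delta>0$ such that $\mathcal W(\mu,\nu)<\varepsilon$ for every $\nu\in\mathcal P(\mathcal X)$ with $\|\mu-\nu\|\le\delta$.
   Context: $\mathcal X=\{1,\dots,d\}$ finite, $\mathcal P(\mathcal X)\subset\mathbb R^{\mathcal X}$, $\|\cdot\|$ the Euclidean norm. $K:\mathcal P(\mathcal X)\times\mathcal X\to\mathbb R$ with $K_x$ twice continuously differentiable; $U=\sum_x\mu_xK_x$, $H_x=\partial_{\mu_x}U$, $\pi_x(\mu)=e^{-H_x(\mu)}/\sum_ze^{-H_z(\mu)}$. $\{Q(\mu)\}$ rate matrices ($Q_{xy}\ge0$, $x\ne y$), each irreducible with $\pi_x(\mu)Q_{xy}(\mu)=\pi_y(\mu)Q_{yx}(\mu)$, $\mu\mapsto Q_{xy}(\mu)$ Lipschitz. $\Lambda(s,t)=\int_0^1s^\alpha t^{1-\alpha}d\alpha$, $w_{xy}(\mu)=\Lambda(\mu_xQ_{xy}(\mu),\mu_yQ_{yx}(\mu))$, $\mathcal A(\mu,\psi)=\frac12\sum_{x,y}(\psi_y-\psi_x)^2w_{xy}(\mu)$. $(c,\psi)\in\mathrm{CE}_1(\mu,\nu)$: $c:[0,1]\to\mathcal P(\mathcal X)$ continuous from $\mu$ to $\nu$, $v_{xy}(t)=w_{xy}(c(t))(\psi_y(t)-\psi_x(t))$ integrable, $\int_0^1[\dot\varphi c_x-\varphi(\delta v)_x]dt=0$ for all $\varphi\in C^1_c((0,1))$, $(\delta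 v)_x=\frac12\sum_y(v_{xy}-v_{yx})$. $\mathcal W(\mu,\nu)^2=\inf\{\int_0^1\mathcal A(c,\psi)dt:(c,\psi)\in\mathrm{CE}_1(\mu,\nu)\}$. *)

theory Defs
  imports "HOL-Analysis.Analysis"
begin

text \<open>The finite state space X = {1..d} is modelled by a finite type 'n;
  measures on X are vectors in real^'n (Euclidean norm).\<close>

definition Prob :: "(real^'n::finite) set" where
  "Prob = {\<mu>. (\<forall>x. 0 \<le> \<mu> $ x) \<and> (\<Sum>x\<in>UNIV. \<mu> $ x) = 1}"

definition C2_on :: "(real^'n::finite) set \<Rightarrow> (real^'n \<Rightarrow> real) \<Rightarrow> bool" where
  "C2_on S f \<longleftrightarrow> (\<exists>f' f''.
     (\<forall>\<mu>\<in>S. (f has_derivative blinfun_apply (f' \<mu>)) (at \<mu>)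
            \<and> (f' has_derivative blinfun_apply (f'' \<mu>)) (at \<mu>))
     \<and> continuous_on S f'')"

definition Upot :: "((real^'n::finite) \<Rightarrow> 'n \<Rightarrow> real) \<Rightarrow> real^'n \<Rightarrow> real" where
  "Upot K \<mu> = (\<Sum>x\<in>UNIV. \<mu> $ x * K \<mu> x)"

definition Hpot :: "((real^'n::finite) \<Rightarrow> 'n \<Rightarrow> real) \<Rightarrow> real^'n \<Rightarrow> 'n \<Rightarrow> real" where
  "Hpot K \<mu> x = frechet_derivative (Upot K) (at \<mu>) (axis x 1)"

definition gibbs :: "((real^'n::finite) \<Rightarrow> 'n \<Rightarrow> real) \<Rightarrow> real^'n \<Rightarrow> 'n \<Rightarrow> real" where
  "gibbs K \<mu> x = exp (- Hpot K \<mu> x) / (\<Sum>z\<in>UNIV. exp (- Hpot K \<mu> z))"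

definition logmean :: "real \<Rightarrow> real \<Rightarrow> real" where
  "logmean s t = integral {0..1} (\<lambda>a. s powr a * t powr (1 - a))"

definition wgt :: "((real^'n::finite) \<Rightarrow> 'n \<Rightarrow> 'n \<Rightarrow> real) \<Rightarrow> real^'n \<Rightarrow> 'n \<Rightarrow> 'n \<Rightarrow> real" where
  "wgt Q \<mu> x y = logmean (\<mu> $ x * Q \<mu> x y) (\<mu> $ y * Q \<mu> y x)"

definition action :: "((real^'n::finite) \<Rightarrow> 'n \<Rightarrow> 'n \<Rightarrow> real) \<Rightarrow> real^'n \<Rightarrow> ('n \<Rightarrow> real) \<Rightarrow> real" where
  "action Q \<mu> \<psi> = 1/2 * (\<Sum>x\<in>UNIV. \<Sum>y\<in>UNIV. (\<psi> y - \<psi> x)^2 * wgt Q \<mu> x y)"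

definition CE1 :: "((real^'n::finite) \<Rightarrow> 'n \<Rightarrow> 'n \<Rightarrow> real) \<Rightarrow> real^'n \<Rightarrow> real^'n
     \<Rightarrow> ((real \<Rightarrow> real^'n) \<times> (real \<Rightarrow> 'n \<Rightarrow> real)) set" where
  "CE1 Q \<mu> \<nu> = {(c, \<psi>).
     continuous_on {0..1} c \<and> (\<forall>t\<in>{0..1}. c t \<in> Prob) \<and> c 0 = \<mu> \<and> c 1 = \<nu> \<and>
     (\<forall>x y. (\<lambda>t. wgt Q (c t) x y * (\<psi> t y - \<psi> t x)) absolutely_integrable_on {0..1}) \<and>
     (\<forall>(\<phi>::real \<Rightarrow> real) \<phi>' a b x.
        (\<forall>t. (\<phi> has_real_derivative \<phi>' t) (at t)) \<and> continuous_on UNIV \<phi>' \<and>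
        0 < a \<and> a \<le> b \<and> b < 1 \<and> (\<forall>t. t \<notin> {a..b} \<longrightarrow> \<phi> t = 0) \<longrightarrow>
        integral {0..1} (\<lambda>t. \<phi>' t * c t $ x
           - \<phi> t * (1/2 * (\<Sum>y\<in>UNIV. wgt Q (c t) x y * (\<psi> t y - \<psi> t x)
                                   - wgt Q (c t) y x * (\<psi> t x - \<psi> t y)))) = 0)}"

definition Wass2 :: "((real^'n::finite) \<Rightarrow> 'n \<Rightarrow> 'n \<Rightarrow> real) \<Rightarrow> real^'n \<Rightarrow> real^'n \<Rightarrow> ennreal" where
  "Wass2 Q \<mu> \<nu> = (INF p\<in>CE1 Q \<mu> \<nu>.
      \<integral>\<^sup>+ t. ennreal (action Q (fst p t) (snd p t)) * indicator {0..1} t \<partial>lborel)"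

definition Wass :: "((real^'n::finite) \<Rightarrow> 'n \<Rightarrow> 'n \<Rightarrow> real) \<Rightarrow> real^'n \<Rightarrow> real^'n \<Rightarrow> ennreal" where
  "Wass Q \<mu> \<nu> = (if Wass2 Q \<mu> \<nu> = top then top else ennreal (sqrt (enn2real (Wass2 Q \<mu> \<nu>))))"

end

theory Submission
  imports Defs
begin


lemma lm_integrand_cont: "continuous_on {0..1} (\<lambda>a::real. s powr a * t powr (1 - a))"
proof -
  have c: "continuous_on {0..1} (\<lambda>a::real. x powr (f a))" if "continuous_on {0..1} f" for x :: real and f
  proof (cases "x = 0")
    case True then show ?thesis by simp
  next
    case False
    then show ?thesis unfolding powr_def using that by (auto intro!: continuous_intros)
  qed
  show ?thesis by (intro continuous_intros c) 
qed

lemma lm_set_integrable: "set_integrable lborel {0..1::real} (\<lambda>a. s powr a * t powr (1 - a))"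
  unfolding set_integrable_def by (rule borel_integrable_compact[OF compact_Icc lm_integrand_cont])

lemma lm_integrable: "(\<lambda>a. s powr a * t powr (1 - a)) integrable_on {0..1::real}"
  using set_borel_integral_eq_integral(1)[OF lm_set_integrable] .

lemma logmean_LINT: "logmean s t = (\<integral>a. indicator {0..1::real} a * (s powr a * t powr (1 - a)) \<partial>lborel)"
  unfolding logmean_def using set_borel_integral_eq_integral(2)[OF lm_set_integrable, of s t]
  by (simp add: set_lebesgue_integral_def)

lemma logmean_measurable[measurable]:
  assumes [measurable]: "f \<in> borel_measurable M" "g \<in> borel_measurable M"
  shows "(\<lambda>x. logmean (f x) (g x)) \<in> borel_measurable M"
proof -
  have "(\<lambda>x. \<integral>a. indicator {0..1::real} a * (f x powr a * g x powr (1 - a)) \<partial>lborel) \<in> borel_measurable M"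
    by measurable
  then show ?thesis by (simp add: logmean_LINT)
qed

lemma logmean_ge_min:
  assumes "0 < s" "0 < t" shows "min s t \<le> logmean s t"
proof -
  have "integral {0..1::real} (\<lambda>a. min s t) \<le> integral {0..1} (\<lambda>a. s powr a * t powr (1 - a))"
  proof (rule integral_le[OF _ lm_integrable])
    show "(\<lambda>a. min s t) integrable_on {0..1::real}" by (metis box_real(2) integrable_const)
    fix a :: real assume a: "a \<in> {0..1}"
    have "min s t = min s t powr a * min s t powr (1 - a)"
      using assms by (simp add: powr_add[symmetric])
    also have "\<dots> \<le> s powr a * t powr (1 - a)"
      using a assms by (intro mult_mono powr_mono2) auto
    finally show "min s t \<le> s powr a * t powr (1 - a)" .
  qed
  then show ?thesis by (simp add: logmean_def)
qed

lemma logmean_nonneg: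
  assumes "0 \<le> s" "0 \<le> t" shows "0 \<le> logmean s t"
  unfolding logmean_def by (rule integral_nonneg[OF lm_integrable]) auto

lemma logmean_le_max:
  assumes "0 \<le> s" "0 \<le> t" shows "logmean s t \<le> max s t"
proof -
  have "integral {0..1::real} (\<lambda>a. s powr a * t powr (1 - a)) \<le> integral {0..1::real} (\<lambda>a. max s t)"
  proof (rule integral_le[where f="\<lambda>a. s powr a * t powr (1 - a)" and g="\<lambda>a. max s t"])
    show "(\<lambda>a. max s t) integrable_on {0..1::real}" by (metis box_real(2) integrable_const)
    show "(\<lambda>a. s powr a * t powr (1 - a)) integrable_on {0..1::real}" by (rule lm_integrable)
    fix a :: real assume a: "a \<in> {0..1}"
    show "s powr a * t powr (1 - a) \<le> max s t"
    proof (cases "max s t = 0")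
      case True then have "s = 0" "t = 0" using assms by auto
      then show ?thesis by simp
    next
      case False
      then have m: "0 < max s t" using assms by auto
      have "s powr a * t powr (1 - a) \<le> max s t powr a * max s t powr (1 - a)"
        using a assms by (intro mult_mono powr_mono2) auto
      also have "\<dots> = max s t" using m by (simp add: powr_add[symmetric])
      finally show ?thesis .
    qed
  qed
  then show ?thesis by (simp add: logmean_def)
qed



definition lap :: "('n::finite \<Rightarrow> 'n \<Rightarrow> real) \<Rightarrow> real^'n \<Rightarrow> 'n \<Rightarrow> real" where
  "lap W p x = (\<Sum>y\<in>UNIV. W x y * (p$y - p$x))"

definition dir :: "('n::finite \<Rightarrow> 'n \<Rightarrow> real) \<Rightarrow> real^'n \<Rightarrow> real" where
  "dir W p = 1/2 * (\<Sum>x\<in>UNIV. \<Sum>y\<in>UNIV. (p$y - p$x)^2 * W x y)"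

lemma lap_inner:
  assumes sym: "\<And>x y. W x y = W y x"
  shows "(\<Sum>x\<in>UNIV. p$x * lap W p x) = - dir W p"
proof -
  have e0: "(\<Sum>x\<in>UNIV. p$x * lap W p x) = (\<Sum>x\<in>UNIV. \<Sum>y\<in>UNIV. W x y * p$x * (p$y - p$x))"
    by (simp add: lap_def sum_distrib_left algebra_simps)
  also have "\<dots> = (\<Sum>y\<in>UNIV. \<Sum>x\<in>UNIV. W x y * p$x * (p$y - p$x))"
    by (rule sum.swap)
  also have "\<dots> = (\<Sum>x\<in>UNIV. \<Sum>y\<in>UNIV. W x y * p$y * (p$x - p$y))"
    using sym by simp
  finally have e: "(\<Sum>x\<in>UNIV. p$x * lap W p x) = (\<Sum>x\<in>UNIV. \<Sum>y\<in>UNIV. W x y * p$y * (p$x - p$y))" .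
  have "2 * (\<Sum>x\<in>UNIV. p$x * lap W p x) = (\<Sum>x\<in>UNIV. \<Sum>y\<in>UNIV. W x y * p$x * (p$y - p$x)) + (\<Sum>x\<in>UNIV. \<Sum>y\<in>UNIV. W x y * p$y * (p$x - p$y))"
    using e e0 by simp
  also have "\<dots> = (\<Sum>x\<in>UNIV. \<Sum>y\<in>UNIV. W x y * p$x * (p$y - p$x) + W x y * p$y * (p$x - p$y))"
    by (simp add: sum.distrib)
  also have "\<dots> = (\<Sum>x\<in>UNIV. \<Sum>y\<in>UNIV. - ((p$y - p$x)^2 * W x y))"
    by (intro sum.cong refl) (simp add: power2_eq_square algebra_simps)
  also have "\<dots> = - 2 * dir W p"
    by (simp add: dir_def sum_negf)
  finally show ?thesis by simp
qed

lemma lap_sum: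
  assumes sym: "\<And>x y. W x y = W y x"
  shows "(\<Sum>x\<in>UNIV. lap W p x) = 0"
proof -
  have "(\<Sum>x\<in>UNIV. lap W p x) = (\<Sum>y\<in>UNIV. \<Sum>x\<in>UNIV. W x y * (p$y - p$x))"
    unfolding lap_def by (rule sum.swap)
  also have "\<dots> = (\<Sum>x\<in>UNIV. \<Sum>y\<in>UNIV. W x y * (p$x - p$y))"
    using sym by simp
  also have "\<dots> = - (\<Sum>x\<in>UNIV. lap W p x)"
    by (simp add: lap_def sum_negf[symmetric] algebra_simps)
  finally show ?thesis by simp
qed

lemma aux_lin: "(a::real) \<le> 2*b + 2*d \<Longrightarrow> d \<le> S \<Longrightarrow> b \<le> K \<Longrightarrow> 0 \<le> x \<Longrightarrow> 0 \<le> S \<Longrightarrow> a \<le> 2*K + 2*(x + S)"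
  by (smt (verit))

lemma connect_bound:
  fixes E :: "('n::finite \<times> 'n) set"
  assumes "(x0, x) \<in> E\<^sup>*"
  shows "\<exists>C>0. \<forall>p::real^'n. (p$x)^2 \<le> C * ((p$x0)^2 + (\<Sum>(a,b)\<in>E. (p$b - p$a)^2))"
  using assms
proof (induction rule: rtrancl_induct)
  case base
  have "\<And>p::real^'n. 0 \<le> (\<Sum>(a,b)\<in>E. (p$b - p$a)^2)"
    by (rule sum_nonneg) (simp add: case_prod_unfold)
  then show ?case by (intro exI[of _ 1]) simp
next
  case (step y z)
  then obtain C where C: "C > 0" "\<And>p::real^'n. (p$y)^2 \<le> C * ((p$x0)^2 + (\<Sum>(a,b)\<in>E. (p$b - p$a)^2))"
    by blast
  show ?case
  proof (rule exI[of _ "2*C + 2"], intro conjI allI)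
    fix p :: "real^'n"
    define S where "S = (\<Sum>(a,b)\<in>E. (p$b - p$a)^2)"
    have S0: "0 \<le> S" unfolding S_def by (rule sum_nonneg) (simp add: case_prod_unfold)
    have "(p$z - p$y)^2 \<le> S"
      unfolding S_def using member_le_sum[where f="\<lambda>(a,b). (p$b - p$a)^2" and i="(y,z)" and A=E] step(2)
      by (simp add: case_prod_unfold)
    moreover have "(p$z)^2 \<le> 2*(p$y)^2 + 2*(p$z - p$y)^2"
    proof -
      have e: "2*(p$y)^2 + 2*(p$z - p$y)^2 - (p$z)^2 = (p$z - 2*p$y)^2"
        by (simp add: power2_eq_square algebra_simps)
      show ?thesis using e zero_le_power2[of "p$z - 2*p$y"] by linarith
    qed
    moreover have "(p$y)^2 \<le> C * ((p$x0)^2 + S)" using C(2) unfolding S_def .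
    ultimately have "(p$z)^2 \<le> 2 * (C * ((p$x0)^2 + S)) + 2 * ((p$x0)^2 + S)"
      using aux_lin S0 zero_le_power2[of "p$x0"] by blast
    also have "\<dots> = (2*C + 2) * ((p$x0)^2 + S)"
      by (simp add: algebra_simps)
    finally show "(p$z)^2 \<le> (2*C + 2) * ((p$x0)^2 + S)" .
  qed (use C in simp)
qed

lemma connect_bound_all:
  fixes E :: "('n::finite \<times> 'n) set"
  assumes "\<And>x. (x0, x) \<in> E\<^sup>*"
  shows "\<exists>C>0. \<forall>p::real^'n. (\<Sum>x\<in>UNIV. (p$x)^2) \<le> C * ((p$x0)^2 + (\<Sum>(a,b)\<in>E. (p$b - p$a)^2))"
proof -
  have "\<forall>x. \<exists>C>0. \<forall>p::real^'n. (p$x)^2 \<le> C * ((p$x0)^2 + (\<Sum>(a,b)\<in>E. (p$b - p$a)^2))"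
    by (intro allI connect_bound assms)
  from choice[OF this] obtain C where C0: "\<forall>x. C x > 0 \<and> (\<forall>p::real^'n. (p$x)^2 \<le> C x * ((p$x0)^2 + (\<Sum>(a,b)\<in>E. (p$b - p$a)^2)))"
    by blast
  then have C: "\<And>x. C x > 0" "\<And>x p. (p$x)^2 \<le> C x * ((p$x0)^2 + (\<Sum>(a,b)\<in>E. (p$b - p$a)^2))"
    by auto
  show ?thesis
  proof (rule exI[of _ "\<Sum>x\<in>UNIV. C x"], intro conjI allI)
    show "0 < (\<Sum>x\<in>UNIV. C x)" using C(1) by (simp add: sum_pos)
    fix p :: "real^'n"
    have "(\<Sum>x\<in>UNIV. (p$x)^2) \<le> (\<Sum>x\<in>UNIV. C x * ((p$x0)^2 + (\<Sum>(a,b)\<in>E. (p$b - p$a)^2)))"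
      by (intro sum_mono C(2))
    then show "(\<Sum>x\<in>UNIV. (p$x)^2) \<le> (\<Sum>x\<in>UNIV. C x) * ((p$x0)^2 + (\<Sum>(a,b)\<in>E. (p$b - p$a)^2))"
      by (simp add: sum_distrib_right)
  qed
qed

lemma dir_lower:
  fixes E :: "('n::finite \<times> 'n) set"
  assumes nn: "\<And>x y. x \<noteq> y \<Longrightarrow> 0 \<le> W x y"
    and lb: "\<And>a b. (a,b) \<in> E \<Longrightarrow> a \<noteq> b \<Longrightarrow> w0 \<le> W a b"
    and w0: "0 \<le> w0"
  shows "w0/2 * (\<Sum>(a,b)\<in>E. (p$b - p$a)^2) \<le> dir W p"
proof -
  have tnn: "0 \<le> (p$y - p$x)^2 * W x y" for x y
    using nn[of x y] by (cases "x = y") auto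
  have "w0 * (\<Sum>(a,b)\<in>E. (p$b - p$a)^2) = (\<Sum>(a,b)\<in>E. w0 * (p$b - p$a)^2)"
    by (simp add: sum_distrib_left case_prod_unfold)
  also have "\<dots> \<le> (\<Sum>(a,b)\<in>E. (p$b - p$a)^2 * W a b)"
  proof (intro sum_mono, clarsimp)
    fix a b assume ab: "(a, b) \<in> E"
    show "w0 * (p $ b - p $ a)\<^sup>2 \<le> (p $ b - p $ a)\<^sup>2 * W a b"
    proof (cases "a = b")
      case False
      then have "w0 \<le> W a b" using lb ab by auto
      then show ?thesis by (simp add: mult.commute mult_right_mono)
    qed simp
  qed
  also have "\<dots> \<le> (\<Sum>(a,b)\<in>UNIV. (p$b - p$a)^2 * W a b)"
    by (intro sum_mono2) (auto simp: tnn)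
  also have "\<dots> = (\<Sum>x\<in>UNIV. \<Sum>y\<in>UNIV. (p$y - p$x)^2 * W x y)"
    by (simp add: sum.cartesian_product[symmetric] UNIV_Times_UNIV[symmetric] del: UNIV_Times_UNIV)
  finally show ?thesis by (simp add: dir_def)
qed

definition Lmat :: "('n::finite \<Rightarrow> 'n \<Rightarrow> real) \<Rightarrow> 'n \<Rightarrow> real^'n^'n" where
  "Lmat W x0 = (\<chi> x y. if x = y then - (\<Sum>z\<in>UNIV-{x}. W x z) - (if x = x0 then 1 else 0) else W x y)"

definition sol :: "('n::finite \<Rightarrow> 'n \<Rightarrow> real) \<Rightarrow> 'n \<Rightarrow> real^'n \<Rightarrow> real^'n" where
  "sol W x0 b = (\<chi> k. det (\<chi> i j. if j = k then b$i else Lmat W x0 $i$j) / det (Lmat W x0))"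

lemma Lmat_mult: "(Lmat W x0 *v p)$x = lap W p x - (if x = x0 then p$x else 0)"
proof -
  have "(Lmat W x0 *v p)$x = (\<Sum>j\<in>UNIV. Lmat W x0 $x$j * p$j)"
    by (simp add: matrix_vector_mult_def)
  also have "\<dots> = Lmat W x0 $x$x * p$x + (\<Sum>j\<in>UNIV-{x}. Lmat W x0 $x$j * p$j)"
    by (simp add: sum.remove)
  also have "\<dots> = (- (\<Sum>z\<in>UNIV-{x}. W x z) - (if x = x0 then 1 else 0)) * p$x + (\<Sum>j\<in>UNIV-{x}. W x j * p$j)"
    by (simp add: Lmat_def)
  also have "\<dots> = (\<Sum>j\<in>UNIV-{x}. W x j * (p$j - p$x)) - (if x = x0 then p$x else 0)"
    by (simp add: algebra_simps sum_subtractf sum_distrib_left sum_distrib_right)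
  also have "(\<Sum>j\<in>UNIV-{x}. W x j * (p$j - p$x)) = lap W p x"
    unfolding lap_def by (simp add: sum_diff1)
  finally show ?thesis .
qed

lemma dir_nonneg:
  assumes nn: "\<And>x y. x \<noteq> y \<Longrightarrow> 0 \<le> W x y"
  shows "0 \<le> dir W p"
proof -
  have h: "0 \<le> (p$y - p$x)^2 * W x y" for x y
    using nn[of x y] by (cases "x = y") auto
  show ?thesis unfolding dir_def
    by (rule mult_nonneg_nonneg, simp, rule sum_nonneg, rule sum_nonneg, rule h)
qed

locale lapsetting =
  fixes W :: "'n::finite \<Rightarrow> 'n \<Rightarrow> real" and E :: "('n \<times> 'n) set" and x0 :: 'n and w0 Kc :: real
  assumes sym: "\<And>x y. W x y = W y x"
    and nn: "\<And>x y. x \<noteq> y \<Longrightarrow> 0 \<le> W x y"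
    and lb: "\<And>a b. (a,b) \<in> E \<Longrightarrow> a \<noteq> b \<Longrightarrow> w0 \<le> W a b"
    and w0: "0 < w0" and Kc0: "0 < Kc"
    and Kc: "\<And>p::real^'n. (\<Sum>x\<in>UNIV. (p$x)^2) \<le> Kc * ((p$x0)^2 + (\<Sum>(a,b)\<in>E. (p$b - p$a)^2))"
begin

lemma Eterm: "(\<Sum>(a,b)\<in>E. (p$b - p$a)^2) \<le> 2 / w0 * dir W p"
proof -
  have "w0/2 * (\<Sum>(a,b)\<in>E. (p$b - p$a)^2) \<le> dir W p"
    by (rule dir_lower) (use nn lb w0 in auto)
  then show ?thesis using w0 by (simp add: field_simps)
qed

lemma det_nz: "det (Lmat W x0) \<noteq> 0"
proof -
  have ker: "p = 0" if p: "Lmat W x0 *v p = 0" for p :: "real^'n"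
  proof -
    have l: "lap W p x = (if x = x0 then p$x else 0)" for x
      using arg_cong[OF p, of "\<lambda>v. v$x"] by (simp add: Lmat_mult)
    have "(\<Sum>x\<in>UNIV. p$x * lap W p x) = (\<Sum>x\<in>UNIV. if x = x0 then (p$x)^2 else 0)"
      by (intro sum.cong refl) (simp add: l power2_eq_square)
    also have "\<dots> = (p$x0)^2" by simp
    finally have "(p$x0)^2 + dir W p = 0" using lap_inner[of W p] sym by simp
    moreover have "0 \<le> dir W p" by (rule dir_nonneg) (rule nn)
    ultimately have a: "p$x0 = 0" and d: "dir W p = 0" by (auto simp: add_nonneg_eq_0_iff)
    have "(\<Sum>x\<in>UNIV. (p$x)^2) \<le> 0"
    proof -
      have "(\<Sum>(a,b)\<in>E. (p$b - p$a)^2) \<le> 0" using Eterm[of p] d by simp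
      then have "Kc * ((p$x0)^2 + (\<Sum>(a,b)\<in>E. (p$b - p$a)^2)) \<le> 0"
        using a Kc0 by (simp add: mult_nonneg_nonpos)
      then show ?thesis using Kc[of p] by linarith
    qed
    moreover have "0 \<le> (\<Sum>x\<in>UNIV. (p$x)^2)" by (intro sum_nonneg) simp
    ultimately have "(\<Sum>x\<in>UNIV. (p$x)^2) = 0" by linarith
    then have "\<forall>x. (p$x)^2 = 0"
      using sum_nonneg_eq_0_iff[of UNIV "\<lambda>x. (p$x)^2"] by simp
    then show "p = 0" by (simp add: vec_eq_iff)
  qed
  then obtain B where "B ** Lmat W x0 = mat 1"
    using matrix_left_invertible_ker by blast
  then have "invertible (Lmat W x0)"
    unfolding invertible_def using matrix_left_right_inverse by blast
  then show ?thesis by (simp add: invertible_det_nz)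
qed

lemma sol_eq: "Lmat W x0 *v sol W x0 b = b"
  using cramer[OF det_nz, of "sol W x0 b" b] by (simp add: sol_def)

lemma sol_lap:
  assumes sb: "(\<Sum>x\<in>UNIV. b$x) = 0"
  shows "sol W x0 b $ x0 = 0" "lap W (sol W x0 b) x = b$x"
proof -
  let ?p = "sol W x0 b"
  have e: "lap W ?p x - (if x = x0 then ?p$x else 0) = b$x" for x
    using arg_cong[OF sol_eq, of "\<lambda>v. v$x"] by (simp add: Lmat_mult)
  have "(\<Sum>x\<in>UNIV. lap W ?p x - (if x = x0 then ?p$x else 0)) = 0"
    using e sb by simp
  then have "0 - ?p$x0 = 0"
    using lap_sum[of W ?p] sym by (simp add: sum_subtractf)
  then show s0: "?p $ x0 = 0" by simp
  show "lap W ?p x = b$x" using e[of x] s0 by (cases "x = x0") auto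
qed

lemma sol_dir:
  assumes sb: "(\<Sum>x\<in>UNIV. b$x) = 0"
  shows "dir W (sol W x0 b) \<le> 2 * Kc / w0 * (norm b)^2"
proof -
  let ?p = "sol W x0 b"
  define D where "D = dir W ?p"
  have D0: "0 \<le> D" unfolding D_def by (rule dir_nonneg) (rule nn)
  have "D = - (\<Sum>x\<in>UNIV. ?p$x * lap W ?p x)"
    unfolding D_def using lap_inner[of W ?p] sym by simp
  also have "\<dots> = - inner ?p b"
    using sol_lap[OF sb] by (simp add: inner_vec_def)
  also have "\<dots> \<le> norm ?p * norm b"
    using norm_cauchy_schwarz[of "-?p" b] by simp
  finally have D1: "D \<le> norm ?p * norm b" .
  have np: "(norm ?p)^2 = (\<Sum>x\<in>UNIV. (?p$x)^2)"
    by (simp add: norm_vec_def L2_set_def real_norm_def sum_nonneg)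
  have "(\<Sum>x\<in>UNIV. (?p$x)^2) \<le> Kc * ((?p$x0)^2 + (\<Sum>(a,b)\<in>E. (?p$b - ?p$a)^2))"
    by (rule Kc)
  also have "\<dots> = Kc * (\<Sum>(a,b)\<in>E. (?p$b - ?p$a)^2)" using sol_lap(1)[OF sb] by simp
  also have "\<dots> \<le> Kc * (2 / w0 * D)"
  proof -
    have "0 \<le> Kc" using Kc0 by simp
    then show ?thesis unfolding D_def by (intro mult_left_mono Eterm)
  qed
  finally have np2: "(norm ?p)^2 \<le> 2 * Kc / w0 * D" using np by (simp add: field_simps)
  have "D^2 \<le> (norm ?p)^2 * (norm b)^2"
    using power_mono[OF D1 D0, of 2] by (simp add: power_mult_distrib)
  also have "\<dots> \<le> (2 * Kc / w0 * D) * (norm b)^2"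
    by (intro mult_right_mono np2) simp
  finally have "D * D \<le> D * (2 * Kc / w0 * (norm b)^2)"
    by (simp add: power2_eq_square algebra_simps)
  then have "D \<le> 2 * Kc / w0 * (norm b)^2"
  proof (cases "D = 0")
    case True
    have "0 \<le> Kc" using Kc0 by simp
    then show ?thesis using True w0 by simp
  next
    case False
    then have "0 < D" using D0 by simp
    from iffD1[OF mult_le_cancel_left_pos[OF this] \<open>D * D \<le> _\<close>] show ?thesis .
  qed
  then show ?thesis by (simp add: D_def)
qed

end



definition ph :: "real \<Rightarrow> real" where "ph t = 3*t^2 - 2*t^3"
definition dph :: "real \<Rightarrow> real" where "dph t = 6*t - 6*t^2"
definition sp :: "real \<Rightarrow> real" where "sp t = 16*t^2*(1-t)^2"
definition dsp :: "real \<Rightarrow> real" where "dsp t = 32*t*(1-t)*(1-2*t)"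
definition cl :: "real \<Rightarrow> real" where "cl t = max 0 (min 1 t)"

lemma ph_deriv: "(ph has_real_derivative dph t) (at t within S)"
  unfolding ph_def dph_def by (auto intro!: derivative_eq_intros simp: power2_eq_square)

lemma sp_deriv: "(sp has_real_derivative dsp t) (at t within S)"
  unfolding sp_def dsp_def by (auto intro!: derivative_eq_intros simp: power2_eq_square algebra_simps)

lemma ph_range: "0 \<le> t \<Longrightarrow> t \<le> 1 \<Longrightarrow> 0 \<le> ph t \<and> ph t \<le> 1"
proof -
  assume t: "0 \<le> t" "t \<le> 1"
  have "ph t = t^2 * (3 - 2*t)" by (simp add: ph_def algebra_simps power3_eq_cube power2_eq_square)
  moreover have "1 - ph t = (1-t)^2 * (1 + 2*t)" by (simp add: ph_def algebra_simps power3_eq_cube power2_eq_square)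
  moreover have "0 \<le> t^2 * (3 - 2*t)" "0 \<le> (1-t)^2 * (1 + 2*t)" using t by (intro mult_nonneg_nonneg; simp)+
  ultimately show ?thesis by linarith
qed

lemma sp_range: "0 \<le> t \<Longrightarrow> t \<le> 1 \<Longrightarrow> 0 \<le> sp t \<and> sp t \<le> 1"
proof -
  assume t: "0 \<le> t" "t \<le> 1"
  have "0 \<le> t*(1-t)" using t by simp
  moreover have "1/4 - t*(1-t) = (t - 1/2)^2" by (simp add: power2_eq_square algebra_simps)
  then have "t*(1-t) \<le> 1/4" using zero_le_power2[of "t - 1/2"] by linarith
  ultimately have "0 \<le> t*(1-t)" "t*(1-t) \<le> 1/4" by auto
  then have "(t*(1-t))^2 \<le> (1/4)^2" by (intro power_mono) auto
  moreover have "sp t = 16 * (t*(1-t))^2" by (simp add: sp_def power_mult_distrib)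
  ultimately show ?thesis by (simp add: power2_eq_square)
qed

lemma sp_pos: "0 < t \<Longrightarrow> t < 1 \<Longrightarrow> 0 < sp t"
  by (simp add: sp_def)

lemma dph_sq: "(dph t)^2 = 9/4 * sp t"
  by (simp add: dph_def sp_def power2_eq_square algebra_simps)

lemma dsp_sq: "0 \<le> t \<Longrightarrow> t \<le> 1 \<Longrightarrow> (dsp t)^2 \<le> 64 * sp t"
proof -
  assume t: "0 \<le> t" "t \<le> 1"
  have e: "(dsp t)^2 = 64 * sp t * (1-2*t)^2" by (simp add: dsp_def sp_def power2_eq_square algebra_simps)
  have "(1-2*t)^2 = 1 - 4*(t*(1-t))" by (simp add: power2_eq_square algebra_simps)
  moreover have "0 \<le> t*(1-t)" using t by simp
  ultimately have "(1-2*t)^2 \<le> 1" by linarith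
  moreover have "0 \<le> sp t" using sp_range t by auto
  ultimately show ?thesis unfolding e by (simp add: mult_left_le)
qed

lemma dph_nonneg: "0 \<le> t \<Longrightarrow> t \<le> 1 \<Longrightarrow> 0 \<le> dph t"
proof -
  assume "0 \<le> t" "t \<le> 1"
  then have "0 \<le> 6*t*(1-t)" by simp
  then show ?thesis by (simp add: dph_def algebra_simps power2_eq_square)
qed

definition unif :: "real^'n::finite" where "unif = (\<chi> x. 1 / real CARD('n))"
definition lin :: "real^'n::finite \<Rightarrow> real^'n \<Rightarrow> real \<Rightarrow> real^'n" where
  "lin m n t = (1 - ph t) *\<^sub>R m + ph t *\<^sub>R n"
definition cpv :: "real^'n::finite \<Rightarrow> real^'n \<Rightarrow> real \<Rightarrow> real \<Rightarrow> real^'n" where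
  "cpv m n e t = (1 - e * sp t) *\<^sub>R lin m n t + (e * sp t) *\<^sub>R unif"
definition dcp :: "real^'n::finite \<Rightarrow> real^'n \<Rightarrow> real \<Rightarrow> real \<Rightarrow> real^'n" where
  "dcp m n e t = ((1 - e * sp t) * dph t) *\<^sub>R (n - m) + (e * dsp t) *\<^sub>R (unif - lin m n t)"

lemma cpv_comp: fixes m :: "real^'n::finite" shows "cpv m n e t $ x = (1 - e * sp t) * ((1 - ph t) * m$x + ph t * n$x) + e * sp t * (1 / real CARD('n))"
  by (simp add: cpv_def lin_def unif_def)

lemma dcp_comp: fixes m :: "real^'n::finite" shows "dcp m n e t $ x = (1 - e * sp t) * dph t * (n$x - m$x) + e * dsp t * (1 / real CARD('n) - ((1 - ph t) * m$x + ph t * n$x))"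
  by (simp add: dcp_def lin_def unif_def)

lemma cpv_deriv: fixes m :: "real^'n::finite"
  shows "((\<lambda>t. cpv m n e t $ x) has_real_derivative dcp m n e t $ x) (at t within S)"
proof -
  have dA: "((\<lambda>t. 1 - e * sp t) has_real_derivative - (e * dsp t)) (at t within S)"
    using DERIV_diff[OF DERIV_const DERIV_cmult[OF sp_deriv]] by simp
  have dL: "((\<lambda>t. (1 - ph t) * m$x + ph t * n$x) has_real_derivative dph t * (n$x - m$x)) (at t within S)"
  proof -
    have "((\<lambda>t. m$x + ph t * (n$x - m$x)) has_real_derivative 0 + dph t * (n$x - m$x)) (at t within S)"
      by (intro DERIV_add DERIV_const DERIV_cmult_right ph_deriv)
    moreover have "(\<lambda>t. m$x + ph t * (n$x - m$x)) = (\<lambda>t. (1 - ph t) * m$x + ph t * n$x)"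
      by (auto simp: algebra_simps)
    ultimately show ?thesis by simp
  qed
  have dC: "((\<lambda>t. e * sp t * (1 / real CARD('n))) has_real_derivative e * dsp t * (1 / real CARD('n))) (at t within S)"
    by (intro DERIV_cmult_right DERIV_cmult sp_deriv)
  have "((\<lambda>t. (1 - e * sp t) * ((1 - ph t) * m$x + ph t * n$x) + e * sp t * (1 / real CARD('n))) has_real_derivative
     (- (e * dsp t)) * ((1 - ph t) * m$x + ph t * n$x) + dph t * (n$x - m$x) * (1 - e * sp t) + e * dsp t * (1 / real CARD('n))) (at t within S)"
    by (intro DERIV_add DERIV_mult dA dL dC)
  then show ?thesis unfolding cpv_comp dcp_comp
    by (rule DERIV_cong) (simp add: algebra_simps)
qed

lemma sum_comb: "(\<Sum>x\<in>UNIV. (a *\<^sub>R v + b *\<^sub>R w :: real^'n::finite)$x) = a*(\<Sum>x\<in>UNIV. v$x) + b*(\<Sum>x\<in>UNIV. w$x)"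
  by (simp add: sum.distrib sum_distrib_left)

lemma sum_minus_vec: "(\<Sum>x\<in>UNIV. (v - w :: real^'n::finite)$x) = (\<Sum>x\<in>UNIV. v$x) - (\<Sum>x\<in>UNIV. w$x)"
  by (simp add: sum_subtractf)

lemma Prob_norm: "p \<in> Prob \<Longrightarrow> norm p \<le> 1"
proof -
  assume p: "p \<in> Prob"
  have "norm p \<le> (\<Sum>i\<in>UNIV. \<bar>p$i\<bar>)" by (rule norm_le_l1_cart)
  also have "\<dots> = (\<Sum>i\<in>UNIV. p$i)" using p by (simp add: Prob_def)
  also have "\<dots> = 1" using p by (simp add: Prob_def)
  finally show ?thesis .
qed

lemma unif_Prob: "unif \<in> Prob"
  by (simp add: Prob_def unif_def)

lemma lin_Prob: "m \<in> Prob \<Longrightarrow> n \<in> Prob \<Longrightarrow> 0 \<le> t \<Longrightarrow> t \<le> 1 \<Longrightarrow> lin m n t \<in> Prob"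
  using ph_range[of t]
  by (auto simp: Prob_def lin_def sum.distrib sum_distrib_left[symmetric] intro!: add_nonneg_nonneg mult_nonneg_nonneg)

lemma conv_Prob: "p \<in> Prob \<Longrightarrow> r \<in> Prob \<Longrightarrow> 0 \<le> a \<Longrightarrow> a \<le> 1 \<Longrightarrow> (1 - a) *\<^sub>R p + a *\<^sub>R r \<in> Prob"
  by (auto simp: Prob_def sum.distrib sum_distrib_left[symmetric] intro!: add_nonneg_nonneg mult_nonneg_nonneg)

context
  fixes m n :: "real^'n::finite" and e t :: real
  assumes m: "m \<in> Prob" and n: "n \<in> Prob" and e: "0 \<le> e" "e \<le> 1" and t: "0 \<le> t" "t \<le> 1"
begin

lemma cpv_Prob: "cpv m n e t \<in> Prob"
proof -
  have "0 \<le> e * sp t" "e * sp t \<le> 1" using sp_range[OF t] e by (auto intro: mult_le_one)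
  then show ?thesis unfolding cpv_def by (intro conv_Prob lin_Prob m n t unif_Prob)
qed

lemma cpv_lower: "e * sp t / real CARD('n) \<le> cpv m n e t $ x"
proof -
  have "0 \<le> (1 - e * sp t) * ((1 - ph t) * m$x + ph t * n$x)"
    using sp_range[OF t] ph_range[OF t] e m n
    by (intro mult_nonneg_nonneg add_nonneg_nonneg) (auto simp: Prob_def intro: mult_le_one)
  then show ?thesis by (simp add: cpv_comp)
qed

lemma cpv_dist: "norm (cpv m n e t - m) \<le> norm (n - m) + 2 * e"
proof -
  have "cpv m n e t - m = ((1 - e * sp t) * ph t) *\<^sub>R (n - m) + (e * sp t) *\<^sub>R (unif - m)"
    by (simp add: cpv_def lin_def algebra_simps)
  also have "norm \<dots> \<le> norm (((1 - e * sp t) * ph t) *\<^sub>R (n - m)) + norm ((e * sp t) *\<^sub>R (unif - m))"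
    by (rule norm_triangle_ineq)
  also have "norm (((1 - e * sp t) * ph t) *\<^sub>R (n - m)) \<le> norm (n - m)"
  proof -
    have "0 \<le> e * sp t" "e * sp t \<le> 1" using sp_range[OF t] e by (auto intro: mult_le_one)
    then have "\<bar>(1 - e * sp t) * ph t\<bar> \<le> 1"
      using ph_range[OF t] by (auto simp: abs_mult intro!: mult_le_one)
    then show ?thesis by (simp add: mult_left_le_one_le)
  qed
  also have "norm ((e * sp t) *\<^sub>R (unif - m)) \<le> 2 * e"
  proof -
    have "norm (unif - m) \<le> 2"
      using norm_triangle_ineq4[of unif m] Prob_norm[OF unif_Prob[where 'a='n]] Prob_norm[OF m] by linarith
    moreover have "\<bar>e * sp t\<bar> \<le> e" using sp_range[OF t] e by (auto simp: abs_mult intro: mult_left_le)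
    ultimately have "\<bar>e * sp t\<bar> * norm (unif - m) \<le> e * 2"
      by (intro mult_mono) auto
    then show ?thesis by simp
  qed
  finally show ?thesis by simp
qed

lemma dcp_sum: "(\<Sum>x\<in>UNIV. dcp m n e t $ x) = 0"
proof -
  have "(\<Sum>x\<in>UNIV. dcp m n e t $ x) = (1 - e * sp t) * dph t * ((\<Sum>x\<in>UNIV. n$x) - (\<Sum>x\<in>UNIV. m$x))
     + e * dsp t * ((\<Sum>x\<in>UNIV. (unif::real^'n) $ x) - (\<Sum>x\<in>UNIV. lin m n t $ x))"
    unfolding dcp_def sum_comb sum_minus_vec by (rule refl)
  then show ?thesis using m n lin_Prob[OF m n t] unif_Prob[where 'a='n] by (simp add: Prob_def)
qed

lemma dcp_norm: "(norm (dcp m n e t))^2 \<le> (9/2 * (norm (n - m))^2 + 512 * e^2) * sp t"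
proof -
  have A: "norm (((1 - e * sp t) * dph t) *\<^sub>R (n - m)) \<le> dph t * norm (n - m)"
  proof -
    have "0 \<le> e * sp t" "e * sp t \<le> 1" using sp_range[OF t] e by (auto intro: mult_le_one)
    then have "\<bar>(1 - e * sp t) * dph t\<bar> \<le> dph t"
      using dph_nonneg[OF t] by (auto simp: abs_mult intro!: mult_left_le_one_le)
    then show ?thesis by (simp add: mult_right_mono)
  qed
  have B: "norm ((e * dsp t) *\<^sub>R (unif - lin m n t)) \<le> 2 * e * \<bar>dsp t\<bar>"
  proof -
    have "norm (unif - lin m n t) \<le> 2"
      using norm_triangle_ineq4[of unif "lin m n t"] Prob_norm[OF unif_Prob[where 'a='n]] Prob_norm[OF lin_Prob[OF m n t]] by linarith
    then have "\<bar>e * dsp t\<bar> * norm (unif - lin m n t) \<le> \<bar>e * dsp t\<bar> * 2"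
      by (intro mult_left_mono) auto
    then show ?thesis using e by (simp add: abs_mult)
  qed
  have "norm (dcp m n e t) \<le> dph t * norm (n - m) + 2 * e * \<bar>dsp t\<bar>"
    unfolding dcp_def using norm_triangle_ineq[of "((1 - e * sp t) * dph t) *\<^sub>R (n - m)" "(e * dsp t) *\<^sub>R (unif - lin m n t)"] A B
    by linarith
  then have "(norm (dcp m n e t))^2 \<le> (dph t * norm (n - m) + 2 * e * \<bar>dsp t\<bar>)^2"
    by (intro power_mono) auto
  also have "\<dots> \<le> 2 * (dph t * norm (n - m))^2 + 2 * (2 * e * \<bar>dsp t\<bar>)^2"
  proof -
    have "\<And>a b::real. (a + b)^2 \<le> 2 * a^2 + 2 * b^2"
    proof -
      fix a b :: real
      have "2 * a^2 + 2 * b^2 - (a + b)^2 = (a - b)^2" by (simp add: power2_eq_square algebra_simps)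
      then show "(a + b)^2 \<le> 2 * a^2 + 2 * b^2" using zero_le_power2[of "a - b"] by linarith
    qed
    then show ?thesis by blast
  qed
  also have "\<dots> = 2 * (dph t)^2 * (norm (n - m))^2 + 8 * e^2 * (dsp t)^2"
    by (simp add: power_mult_distrib power2_abs)
  also have "\<dots> \<le> 2 * (9/4 * sp t) * (norm (n - m))^2 + 8 * e^2 * (64 * sp t)"
    unfolding dph_sq by (intro add_left_mono mult_left_mono dsp_sq t) auto
  also have "\<dots> = (9/2 * (norm (n - m))^2 + 512 * e^2) * sp t"
    by (simp add: algebra_simps)
  finally show ?thesis .
qed

end

lemma cpv_0: "cpv m n e 0 = m" by (simp add: cpv_def lin_def ph_def sp_def)
lemma cpv_1: "cpv m n e 1 = n" by (simp add: cpv_def lin_def ph_def sp_def)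

lemma cl_range: "0 \<le> cl t" "cl t \<le> 1" by (auto simp: cl_def)
lemma cl_id: "0 \<le> t \<Longrightarrow> t \<le> 1 \<Longrightarrow> cl t = t" by (simp add: cl_def)

lemma cpv_cont: "continuous_on UNIV (\<lambda>t. cpv m n e (cl t))"
  unfolding cpv_def lin_def ph_def sp_def cl_def
  by (intro continuous_intros)



definition Wsym :: "((real^'n::finite) \<Rightarrow> 'n \<Rightarrow> 'n \<Rightarrow> real) \<Rightarrow> real^'n \<Rightarrow> 'n \<Rightarrow> 'n \<Rightarrow> real" where
  "Wsym Q m x y = (wgt Q m x y + wgt Q m y x) / 2"

lemma action_dir: "action Q m (\<lambda>y. p$y) = dir (Wsym Q m) p"
proof -
  have "(\<Sum>x\<in>UNIV. \<Sum>y\<in>UNIV. (p$y - p$x)^2 * wgt Q m y x) = (\<Sum>y\<in>UNIV. \<Sum>x\<in>UNIV. (p$y - p$x)^2 * wgt Q m y x)"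
    by (rule sum.swap)
  also have "\<dots> = (\<Sum>x\<in>UNIV. \<Sum>y\<in>UNIV. (p$y - p$x)^2 * wgt Q m x y)"
    by (intro sum.cong refl) (simp add: power2_commute)
  finally have e: "(\<Sum>x\<in>UNIV. \<Sum>y\<in>UNIV. (p$y - p$x)^2 * wgt Q m y x) = (\<Sum>x\<in>UNIV. \<Sum>y\<in>UNIV. (p$y - p$x)^2 * wgt Q m x y)" .
  have "dir (Wsym Q m) p = 1/2 * (1/2 * ((\<Sum>x\<in>UNIV. \<Sum>y\<in>UNIV. (p$y - p$x)^2 * wgt Q m x y) + (\<Sum>x\<in>UNIV. \<Sum>y\<in>UNIV. (p$y - p$x)^2 * wgt Q m y x)))"
    by (simp add: dir_def Wsym_def sum.distrib sum_divide_distrib[symmetric] algebra_simps)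
  also have "\<dots> = action Q m (\<lambda>y. p$y)"
    unfolding e by (simp add: action_def)
  finally show ?thesis ..
qed

lemma div_lap: "1/2 * (\<Sum>y\<in>UNIV. wgt Q m x y * (p$y - p$x) - wgt Q m y x * (p$x - p$y)) = lap (Wsym Q m) p x"
  unfolding lap_def Wsym_def sum_distrib_left by (intro sum.cong refl) (simp add: algebra_simps)

lemma dir_term:
  assumes nn: "\<And>x y. x \<noteq> y \<Longrightarrow> 0 \<le> W x y"
  shows "(p$y - p$x)^2 * W x y \<le> 2 * dir W p"
proof -
  have h: "0 \<le> (p$b - p$a)^2 * W a b" for a b
    using nn[of a b] by (cases "a = b") auto
  have "(p$y - p$x)^2 * W x y \<le> (\<Sum>b\<in>UNIV. (p$b - p$x)^2 * W x b)"
    by (rule member_le_sum) (auto simp: h)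
  also have "\<dots> \<le> (\<Sum>a\<in>UNIV. \<Sum>b\<in>UNIV. (p$b - p$a)^2 * W a b)"
    by (rule member_le_sum[where f="\<lambda>a. \<Sum>b\<in>UNIV. (p$b - p$a)^2 * W a b"]) (auto intro: sum_nonneg h)
  finally show ?thesis by (simp add: dir_def)
qed

lemma det_measurable:
  fixes A :: "'a \<Rightarrow> real^'n::finite^'n"
  assumes [measurable]: "\<And>i j. (\<lambda>t. A t $ i $ j) \<in> borel_measurable M"
  shows "(\<lambda>t. det (A t)) \<in> borel_measurable M"
  unfolding det_def by measurable

lemma sol_measurable:
  fixes W :: "'a \<Rightarrow> 'n::finite \<Rightarrow> 'n \<Rightarrow> real"
  assumes [measurable]: "\<And>i j. (\<lambda>t. W t i j) \<in> borel_measurable M"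
    and [measurable]: "\<And>i. (\<lambda>t. b t $ i) \<in> borel_measurable M"
  shows "(\<lambda>t. sol (W t) x0 (b t) $ k) \<in> borel_measurable M"
proof -
  have [measurable]: "(\<lambda>t. Lmat (W t) x0 $ i $ j) \<in> borel_measurable M" for i j
    unfolding Lmat_def by simp
  have [measurable]: "(\<lambda>t. det (Lmat (W t) x0)) \<in> borel_measurable M"
    by (rule det_measurable) measurable
  have [measurable]: "(\<lambda>t. det (\<chi> i j. if j = k then b t $ i else Lmat (W t) x0 $ i $ j)) \<in> borel_measurable M"
    by (rule det_measurable) simp
  show ?thesis unfolding sol_def by simp
qed



lemma gibbs_pos: "0 < gibbs K m x"
proof -
  have "0 < (\<Sum>z\<in>UNIV. exp (- Hpot K m z))" by (intro sum_pos) auto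
  then show ?thesis by (simp add: gibbs_def)
qed

theorem lemma4p3:
  fixes K :: "real^'n::finite \<Rightarrow> 'n \<Rightarrow> real"
    and Q :: "real^'n \<Rightarrow> 'n \<Rightarrow> 'n \<Rightarrow> real"
    and S :: "(real^'n) set"
  assumes S_open: "open S" and S_Prob: "Prob \<subseteq> S"
    and K_C2: "\<And>x. C2_on S (\<lambda>\<mu>. K \<mu> x)"
    and Q_rate: "\<And>\<mu> x y. \<mu> \<in> Prob \<Longrightarrow> x \<noteq> y \<Longrightarrow> 0 \<le> Q \<mu> x y"
    and Q_irred: "\<And>\<mu> x y. \<mu> \<in> Prob \<Longrightarrow> (x, y) \<in> {(a, b). a \<noteq> b \<and> 0 < Q \<mu> a b}\<^sup>*"
    and Q_rev: "\<And>\<mu> x y. \<mu> \<in> Prob \<Longrightarrow> gibbs K \<mu> x * Q \<mu> x y = gibbs K \<mu> y * Q \<mu> y x"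
    and Q_lip: "\<And>x y. \<exists>L. L-lipschitz_on Prob (\<lambda>\<mu>. Q \<mu> x y)"
  shows "\<forall>\<mu>\<in>Prob. \<forall>\<epsilon>>0. \<exists>\<delta>>0. \<forall>\<nu>\<in>Prob. norm (\<mu> - \<nu>) \<le> \<delta> \<longrightarrow> Wass Q \<mu> \<nu> < ennreal \<epsilon>"
proof (intro ballI allI impI)
  fix \<mu> :: "real^'n" and \<epsilon> :: real
  assume \<mu>: "\<mu> \<in> Prob" and \<epsilon>: "0 < \<epsilon>"
  define E where "E = {(a, b). a \<noteq> b \<and> 0 < Q \<mu> a b}"
  define x0 :: 'n where "x0 = undefined"
  obtain Kc where Kc0: "0 < Kc" and
    Kc: "\<And>p::real^'n. (\<Sum>x\<in>UNIV. (p$x)^2) \<le> Kc * ((p$x0)^2 + (\<Sum>(a,b)\<in>E. (p$b - p$a)^2))"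
    using connect_bound_all[of x0 E] Q_irred[OF \<mu>] unfolding E_def by blast
  have Erev: "0 < Q \<mu> b a" if "(a, b) \<in> E" for a b
  proof -
    have "0 < gibbs K \<mu> a * Q \<mu> a b" using that gibbs_pos[of K \<mu> a] by (simp add: E_def)
    then have "0 < gibbs K \<mu> b * Q \<mu> b a" using Q_rev[OF \<mu>, of a b] by simp
    then show ?thesis using gibbs_pos[of K \<mu> b] by (simp add: zero_less_mult_iff)
  qed
  define q where "q = Min (insert 1 ((\<lambda>(a,b). min (Q \<mu> a b) (Q \<mu> b a) / 2) ` E))"
  have q0: "0 < q"
    unfolding q_def using Erev by (auto simp: E_def)
  have qE: "2 * q \<le> Q \<mu> a b \<and> 2 * q \<le> Q \<mu> b a" if "(a, b) \<in> E" for a b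
  proof -
    have "q \<le> min (Q \<mu> a b) (Q \<mu> b a) / 2"
      unfolding q_def using that by (intro Min_le) auto
    then show ?thesis by auto
  qed
  have "\<forall>pq. \<exists>L. L-lipschitz_on Prob (\<lambda>m. Q m (fst pq) (snd pq))"
    using Q_lip by blast
  from choice[OF this] obtain Lf where Lf: "\<And>pq. (Lf pq)-lipschitz_on Prob (\<lambda>m. Q m (fst pq) (snd pq))"
    by blast
  define Lm where "Lm = Max (insert 1 (range Lf))"
  have Lm1: "1 \<le> Lm" unfolding Lm_def by simp
  have LfLm: "Lf pq \<le> Lm" for pq unfolding Lm_def by (rule Max_ge) auto
  have Qlip: "\<bar>Q m a b - Q m' a b\<bar> \<le> Lm * norm (m - m')" if "m \<in> Prob" "m' \<in> Prob" for m m' a b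
  proof -
    have "dist (Q m a b) (Q m' a b) \<le> Lf (a, b) * dist m m'"
      using lipschitz_onD[OF Lf[of "(a,b)"] that] by simp
    also have "\<dots> \<le> Lm * dist m m'" by (intro mult_right_mono LfLm) simp
    finally show ?thesis by (simp add: dist_norm dist_real_def)
  qed
  define r where "r = q / Lm"
  have r0: "0 < r" unfolding r_def using q0 Lm1 by simp
  have Qnear: "q \<le> Q m a b \<and> q \<le> Q m b a" if "m \<in> Prob" "norm (m - \<mu>) \<le> r" "(a, b) \<in> E" for m a b
  proof -
    have "Lm * norm (m - \<mu>) \<le> Lm * r" using that(2) Lm1 by (intro mult_left_mono) auto
    also have "\<dots> = q" unfolding r_def using Lm1 by simp
    finally have h: "Lm * norm (m - \<mu>) \<le> q" .
    show ?thesis using Qlip[OF that(1) \<mu>, of a b] Qlip[OF that(1) \<mu>, of b a] qE[OF that(3)] h by linarith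
  qed
  define Qm where "Qm = Max (range (\<lambda>pq. \<bar>Q \<mu> (fst pq) (snd pq)\<bar>)) + 2 * Lm"
  have Qbd: "\<bar>Q m a b\<bar> \<le> Qm" if "m \<in> Prob" for m a b
  proof -
    have "norm (m - \<mu>) \<le> 2"
      using norm_triangle_ineq4[of m \<mu>] Prob_norm[OF that] Prob_norm[OF \<mu>] by linarith
    then have "Lm * norm (m - \<mu>) \<le> Lm * 2" using Lm1 by (intro mult_left_mono) auto
    moreover have "\<bar>Q \<mu> a b\<bar> \<le> Max (range (\<lambda>pq. \<bar>Q \<mu> (fst pq) (snd pq)\<bar>))"
      by (rule Max_ge) (auto intro: image_eqI[where x="(a,b)"])
    ultimately show ?thesis using Qlip[OF that \<mu>, of a b] unfolding Qm_def by linarith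
  qed
  define N where "N = real CARD('n)"
  have N1: "1 \<le> N" unfolding N_def by (simp add: Suc_le_eq)
  define C0 where "C0 = 1033 * Kc * N / q"
  have C00: "0 < C0" unfolding C0_def using Kc0 q0 N1 by simp
  define \<eta> where "\<eta> = min (min 1 (r/4)) (\<epsilon>^2 / (2 * C0))"
  have \<eta>0: "0 < \<eta>" unfolding \<eta>_def using r0 \<epsilon> C00 by simp
  have \<eta>1: "\<eta> \<le> 1" "\<eta> \<le> r/4" "\<eta> \<le> \<epsilon>^2 / (2 * C0)" unfolding \<eta>_def by auto
  show "\<exists>\<delta>>0. \<forall>\<nu>\<in>Prob. norm (\<mu> - \<nu>) \<le> \<delta> \<longrightarrow> Wass Q \<mu> \<nu> < ennreal \<epsilon>"
  proof (intro exI[of _ \<eta>] conjI ballI impI \<eta>0)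
    fix \<nu> :: "real^'n" assume \<nu>: "\<nu> \<in> Prob" and d: "norm (\<mu> - \<nu>) \<le> \<eta>"
    have d': "norm (\<nu> - \<mu>) \<le> \<eta>" using d by (simp add: norm_minus_commute)
    define c where "c t = cpv \<mu> \<nu> \<eta> (cl t)" for t
    define bb where "bb t = - dcp \<mu> \<nu> \<eta> t" for t
    define W where "W t = Wsym Q (c t)" for t
    define w0 where "w0 t = q * \<eta> * sp t / N" for t
    define \<psi> where "\<psi> t = (\<lambda>y. if t \<in> {0<..<1} then sol (W t) x0 (bb t) $ y else 0)" for t
    define B where "B = C0 * \<eta>"
    have B0: "0 \<le> B" unfolding B_def using C00 \<eta>0 by simp
    have Beps: "B < \<epsilon>^2"
    proof -
      have "B \<le> C0 * (\<epsilon>^2 / (2 * C0))" unfolding B_def using C00 \<eta>1(3) by (intro mult_left_mono) auto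
      also have "\<dots> = \<epsilon>^2 / 2" using C00 by simp
      moreover have "0 < \<epsilon>^2" using \<epsilon> by simp
      ultimately show ?thesis by linarith
    qed
    have ct: "c t \<in> Prob" for t
      unfolding c_def using cl_range[of t] \<eta>0 \<eta>1 by (intro cpv_Prob \<mu> \<nu>) auto
    have c_in: "c t = cpv \<mu> \<nu> \<eta> t" if "0 \<le> t" "t \<le> 1" for t
      unfolding c_def using that by (simp add: cl_id)
    have cnear: "norm (c t - \<mu>) \<le> r" for t
    proof -
      have "norm (c t - \<mu>) \<le> norm (\<nu> - \<mu>) + 2 * \<eta>"
        unfolding c_def using cl_range[of t] \<eta>0 \<eta>1 by (intro cpv_dist \<mu> \<nu>) auto
      then show ?thesis using d' \<eta>1 r0 by linarith
    qed
    have wnn: "0 \<le> wgt Q (c t) x y" if "x \<noteq> y" for t x y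
      unfolding wgt_def using ct[of t] Q_rate[OF ct[of t] that] Q_rate[OF ct[of t], of y x] that
      by (intro logmean_nonneg mult_nonneg_nonneg) (auto simp: Prob_def)
    have wle: "wgt Q (c t) x y \<le> Qm" if "x \<noteq> y" for t x y
    proof -
      have cx: "0 \<le> c t $ z" "c t $ z \<le> 1" for z
      proof -
        show "0 \<le> c t $ z" using ct[of t] by (simp add: Prob_def)
        have "c t $ z \<le> (\<Sum>z\<in>UNIV. c t $ z)"
          by (rule member_le_sum) (use ct[of t] in \<open>auto simp: Prob_def\<close>)
        then show "c t $ z \<le> 1" using ct[of t] by (simp add: Prob_def)
      qed
      have a1: "c t $ x * Q (c t) x y \<le> Qm"
      proof -
        have "c t $ x * Q (c t) x y \<le> 1 * Qm"
          using cx[of x] Qbd[OF ct[of t], of x y] Q_rate[OF ct[of t] that]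
          by (intro mult_mono) auto
        then show ?thesis by simp
      qed
      have a2: "c t $ y * Q (c t) y x \<le> Qm"
      proof -
        have "c t $ y * Q (c t) y x \<le> 1 * Qm"
          using cx[of y] Qbd[OF ct[of t], of y x] Q_rate[OF ct[of t], of y x] that
          by (intro mult_mono) auto
        then show ?thesis by simp
      qed
      have "wgt Q (c t) x y \<le> max (c t $ x * Q (c t) x y) (c t $ y * Q (c t) y x)"
        unfolding wgt_def using cx Q_rate[OF ct[of t] that] Q_rate[OF ct[of t], of y x] that
        by (intro logmean_le_max mult_nonneg_nonneg) auto
      then show ?thesis using a1 a2 by linarith
    qed
    have Wsymm: "W t x y = W t y x" for t x y unfolding W_def Wsym_def by simp
    have Wnn: "0 \<le> W t x y" if "x \<noteq> y" for t x y
      unfolding W_def Wsym_def using wnn[OF that, of t] wnn[of y x t] that by simp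
    have Wlb: "w0 t \<le> W t a b" if "(a, b) \<in> E" "0 < t" "t < 1" for t a b
    proof -
      have t01: "0 \<le> t" "t \<le> 1" using that by auto
      have spt: "0 < sp t" using sp_pos that by auto
      have lowc: "\<eta> * sp t / N \<le> c t $ z" for z
        using cpv_lower[OF \<mu> \<nu> less_imp_le[OF \<eta>0] \<eta>1(1) t01, of z] c_in[OF t01] by (simp add: N_def)
      have qq: "q \<le> Q (c t) a b" "q \<le> Q (c t) b a" using Qnear[OF ct cnear that(1)] by auto
      have pos: "0 < \<eta> * sp t / N" using \<eta>0 spt N1 by simp
      have m1: "w0 t \<le> c t $ a * Q (c t) a b"
        unfolding w0_def using mult_mono[OF lowc[of a] qq(1)] pos q0 ct[of t] by (simp add: algebra_simps Prob_def)
      have m2: "w0 t \<le> c t $ b * Q (c t) b a"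
        unfolding w0_def using mult_mono[OF lowc[of b] qq(2)] pos q0 ct[of t] by (simp add: algebra_simps Prob_def)
      have w0p: "0 < w0 t" unfolding w0_def using \<eta>0 spt N1 q0 by simp
      have "w0 t \<le> min (c t $ a * Q (c t) a b) (c t $ b * Q (c t) b a)" using m1 m2 by simp
      also have "\<dots> \<le> wgt Q (c t) a b"
        unfolding wgt_def using m1 m2 w0p by (intro logmean_ge_min) auto
      finally have 1: "w0 t \<le> wgt Q (c t) a b" .
      have "w0 t \<le> min (c t $ b * Q (c t) b a) (c t $ a * Q (c t) a b)" using m1 m2 by simp
      also have "\<dots> \<le> wgt Q (c t) b a"
        unfolding wgt_def using m1 m2 w0p by (intro logmean_ge_min) auto
      finally have 2: "w0 t \<le> wgt Q (c t) b a" .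
      show ?thesis unfolding W_def Wsym_def using 1 2 by simp
    qed
    have LS: "lapsetting (W t) E x0 (w0 t) Kc" if "0 < t" "t < 1" for t
    proof
      show "W t x y = W t y x" for x y by (rule Wsymm)
      show "0 \<le> W t x y" if "x \<noteq> y" for x y using Wnn that by simp
      show "w0 t \<le> W t a b" if "(a, b) \<in> E" "a \<noteq> b" for a b using Wlb that \<open>0 < t\<close> \<open>t < 1\<close> by simp
      show "0 < w0 t" unfolding w0_def using q0 \<eta>0 sp_pos[OF that] N1 by simp
      show "0 < Kc" by (rule Kc0)
      show "(\<Sum>x\<in>UNIV. (p$x)^2) \<le> Kc * ((p$x0)^2 + (\<Sum>(a,b)\<in>E. (p$b - p$a)^2))" for p :: "real^'n"
        by (rule Kc)
    qed
    have bbsum: "(\<Sum>x\<in>UNIV. bb t $ x) = 0" if "0 \<le> t" "t \<le> 1" for t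
      unfolding bb_def using dcp_sum[OF \<mu> \<nu> less_imp_le[OF \<eta>0] \<eta>1(1) that] by (simp add: sum_negf)
    have sol_lap': "lap (W t) (sol (W t) x0 (bb t)) x = bb t $ x" if "0 < t" "t < 1" for t x
      using lapsetting.sol_lap(2)[OF LS[OF that] bbsum] that by auto
    have sol_dirB: "dir (W t) (sol (W t) x0 (bb t)) \<le> B" if "0 < t" "t < 1" for t
    proof -
      have t01: "0 \<le> t" "t \<le> 1" using that by auto
      have spt: "0 < sp t" using sp_pos that by auto
      have A: "dir (W t) (sol (W t) x0 (bb t)) \<le> 2 * Kc / w0 t * (norm (bb t))^2"
        using lapsetting.sol_dir[OF LS[OF that] bbsum[OF t01]] .
      have "(norm (bb t))^2 \<le> (9/2 * (norm (\<nu> - \<mu>))^2 + 512 * \<eta>^2) * sp t"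
        unfolding bb_def using dcp_norm[OF \<mu> \<nu> less_imp_le[OF \<eta>0] \<eta>1(1) t01] by simp
      also have "\<dots> \<le> (9/2 * \<eta>^2 + 512 * \<eta>^2) * sp t"
        using d' spt by (intro mult_right_mono add_right_mono mult_left_mono power_mono) auto
      finally have Bn: "(norm (bb t))^2 \<le> (9/2 * \<eta>^2 + 512 * \<eta>^2) * sp t" .
      have pw: "0 \<le> 2 * Kc / w0 t" unfolding w0_def using Kc0 q0 \<eta>0 spt N1 by simp
      have "dir (W t) (sol (W t) x0 (bb t)) \<le> 2 * Kc / w0 t * ((9/2 * \<eta>^2 + 512 * \<eta>^2) * sp t)"
        using A mult_left_mono[OF Bn pw] by linarith
      also have "\<dots> = B"
        unfolding B_def C0_def w0_def using q0 \<eta>0 spt N1 by (simp add: field_simps power2_eq_square)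
      finally show ?thesis .
    qed
    have cfun: "c = (\<lambda>t. cpv \<mu> \<nu> \<eta> (cl t))" by (rule ext) (simp add: c_def)
    have ccont: "continuous_on UNIV c" unfolding cfun by (rule cpv_cont)
    have cm[measurable]: "(\<lambda>t. c t $ z) \<in> borel_measurable borel" for z
      by (rule borel_measurable_continuous_onI) (intro continuous_on_component ccont)
    have Qcm[measurable]: "(\<lambda>t. Q (c t) a b) \<in> borel_measurable borel" for a b
    proof (rule borel_measurable_continuous_onI)
      have "continuous_on Prob (\<lambda>m. Q m (fst (a,b)) (snd (a,b)))"
        by (rule lipschitz_on_continuous_on[OF Lf])
      then show "continuous_on UNIV (\<lambda>t. Q (c t) a b)"
        using continuous_on_compose2[OF _ ccont, of Prob "\<lambda>m. Q m a b"] ct by auto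
    qed
    have wm[measurable]: "(\<lambda>t. wgt Q (c t) a b) \<in> borel_measurable borel" for a b
      unfolding wgt_def by measurable
    have Wm[measurable]: "(\<lambda>t. W t a b) \<in> borel_measurable borel" for a b
      unfolding W_def Wsym_def by measurable
    have bbm[measurable]: "(\<lambda>t. bb t $ z) \<in> borel_measurable borel" for z
    proof (rule borel_measurable_continuous_onI)
      show "continuous_on UNIV (\<lambda>t. bb t $ z)"
        unfolding bb_def vector_uminus_component dcp_comp ph_def dph_def sp_def dsp_def
        by (intro continuous_intros)
    qed
    have solm[measurable]: "(\<lambda>t. sol (W t) x0 (bb t) $ k) \<in> borel_measurable borel" for k
      by (rule sol_measurable) measurable
    have psim[measurable]: "(\<lambda>t. \<psi> t y) \<in> borel_measurable borel" for y
      unfolding \<psi>_def by measurable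
    have Qm0: "0 \<le> Qm" using Qbd[OF \<mu>, of x0 x0] by linarith
    have vbd: "norm (wgt Q (c t) x y * (\<psi> t y - \<psi> t x)) \<le> sqrt (4 * Qm * B)" if "t \<in> {0..1}" for t x y
    proof (cases "t \<in> {0<..<1} \<and> x \<noteq> y")
      case True
      then have t: "0 < t" "t < 1" and xy: "x \<noteq> y" by auto
      define p where "p = sol (W t) x0 (bb t)"
      have ps: "\<psi> t z = p $ z" for z unfolding \<psi>_def p_def using t by simp
      define w where "w = wgt Q (c t) x y"
      define D where "D = (p$y - p$x)^2"
      have w0': "0 \<le> w" "w \<le> Qm" unfolding w_def using wnn[OF xy] wle[OF xy] by auto
      have D0: "0 \<le> D" unfolding D_def by simp
      have "w * D \<le> 2 * (D * W t x y)"
        unfolding W_def Wsym_def w_def using wnn[of y x t] xy D0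
        by (simp add: algebra_simps mult_left_mono)
      also have "D * W t x y \<le> 2 * dir (W t) p"
        unfolding D_def by (rule dir_term) (rule Wnn)
      also have "dir (W t) p \<le> B" unfolding p_def by (rule sol_dirB[OF t])
      finally have wD: "w * D \<le> 4 * B" by simp
      have "(wgt Q (c t) x y * (\<psi> t y - \<psi> t x))^2 = w * (w * D)"
        unfolding ps w_def D_def by (simp add: power2_eq_square algebra_simps)
      also have "\<dots> \<le> Qm * (w * D)" using w0' D0 by (intro mult_right_mono) auto
      also have "\<dots> \<le> Qm * (4 * B)" using wD Qm0 by (intro mult_left_mono) auto
      finally have "(wgt Q (c t) x y * (\<psi> t y - \<psi> t x))^2 \<le> 4 * Qm * B" by simp
      then show ?thesis using real_sqrt_le_mono[of "(wgt Q (c t) x y * (\<psi> t y - \<psi> t x))^2" "4 * Qm * B"]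
        by simp
    next
      case False
      then have e: "wgt Q (c t) x y * (\<psi> t y - \<psi> t x) = 0" unfolding \<psi>_def by auto
      have s0: "0 \<le> sqrt (4 * Qm * B)" using Qm0 B0 by simp
      show ?thesis unfolding e norm_zero by (rule s0)
    qed
    have integ: "(\<lambda>t. wgt Q (c t) x y * (\<psi> t y - \<psi> t x)) absolutely_integrable_on {0..1}" for x y
    proof (rule measurable_bounded_by_integrable_imp_absolutely_integrable)
      have "(\<lambda>t. wgt Q (c t) x y * (\<psi> t y - \<psi> t x)) \<in> borel_measurable borel" by measurable
      from measurable_comp[OF id_borel_measurable_lebesgue_on[of "{0..1::real}"] this]
      show "(\<lambda>t. wgt Q (c t) x y * (\<psi> t y - \<psi> t x)) \<in> borel_measurable (lebesgue_on {0..1})"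
        by (simp add: comp_def)
      show "{0..1::real} \<in> sets lebesgue" by simp
      show "(\<lambda>t. sqrt (4 * Qm * B)) integrable_on {0..1::real}" by (metis box_real(2) integrable_const)
      show "\<And>t. t \<in> {0..1} \<Longrightarrow> norm (wgt Q (c t) x y * (\<psi> t y - \<psi> t x)) \<le> sqrt (4 * Qm * B)"
        by (rule vbd)
    qed
    have CEeq: "integral {0..1} (\<lambda>t. \<phi>' t * c t $ x
           - \<phi> t * (1/2 * (\<Sum>y\<in>UNIV. wgt Q (c t) x y * (\<psi> t y - \<psi> t x)
                                   - wgt Q (c t) y x * (\<psi> t x - \<psi> t y)))) = 0"
      if H: "(\<forall>t. (\<phi> has_real_derivative \<phi>' t) (at t)) \<and> continuous_on UNIV \<phi>' \<and>
        0 < a \<and> a \<le> b \<and> b < 1 \<and> (\<forall>t. t \<notin> {a..b} \<longrightarrow> \<phi> t = 0)"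
      for \<phi> :: "real \<Rightarrow> real" and \<phi>' a b x
    proof -
      have phd: "(\<phi> has_real_derivative \<phi>' t) (at t)" for t using H by blast
      have ph0: "\<phi> 0 = 0" "\<phi> 1 = 0" using H by auto
      define g where "g t = \<phi>' t * cpv \<mu> \<nu> \<eta> t $ x + \<phi> t * dcp \<mu> \<nu> \<eta> t $ x" for t
      have gd: "((\<lambda>t. \<phi> t * cpv \<mu> \<nu> \<eta> t $ x) has_vector_derivative g t) (at t within {0..1})" for t
      proof -
        have "((\<lambda>t. \<phi> t * cpv \<mu> \<nu> \<eta> t $ x) has_real_derivative \<phi>' t * cpv \<mu> \<nu> \<eta> t $ x + dcp \<mu> \<nu> \<eta> t $ x * \<phi> t) (at t within {0..1})"
          by (intro DERIV_mult has_field_derivative_at_within[OF phd] cpv_deriv)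
        then show ?thesis unfolding g_def has_real_derivative_iff_has_vector_derivative
          by (simp add: mult.commute)
      qed
      have "(g has_integral (\<phi> 1 * cpv \<mu> \<nu> \<eta> 1 $ x - \<phi> 0 * cpv \<mu> \<nu> \<eta> 0 $ x)) {0..1}"
        by (rule fundamental_theorem_of_calculus) (auto intro: gd)
      then have gi: "integral {0..1} g = 0" using ph0 by (simp add: integral_unique)
      have "integral {0..1} (\<lambda>t. \<phi>' t * c t $ x
           - \<phi> t * (1/2 * (\<Sum>y\<in>UNIV. wgt Q (c t) x y * (\<psi> t y - \<psi> t x)
                                   - wgt Q (c t) y x * (\<psi> t x - \<psi> t y)))) = integral {0..1} g"
      proof (rule integral_spike[of "{0,1}"])
        show "negligible {0::real, 1}" by simp
        fix t :: real assume t: "t \<in> {0..1} - {0, 1}"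
        then have t01: "0 < t" "t < 1" by (auto simp: less_le)
        define p where "p = sol (W t) x0 (bb t)"
        have ps: "\<psi> t = (\<lambda>z. p $ z)" unfolding \<psi>_def p_def using t01 by auto
        have "1/2 * (\<Sum>y\<in>UNIV. wgt Q (c t) x y * (\<psi> t y - \<psi> t x) - wgt Q (c t) y x * (\<psi> t x - \<psi> t y))
            = lap (W t) p x"
          unfolding ps W_def by (rule div_lap)
        also have "\<dots> = bb t $ x" unfolding p_def by (rule sol_lap'[OF t01])
        finally have e: "1/2 * (\<Sum>y\<in>UNIV. wgt Q (c t) x y * (\<psi> t y - \<psi> t x) - wgt Q (c t) y x * (\<psi> t x - \<psi> t y))
            = - dcp \<mu> \<nu> \<eta> t $ x" by (simp add: bb_def)
        show "g t = \<phi>' t * c t $ x - \<phi> t * (1/2 * (\<Sum>y\<in>UNIV. wgt Q (c t) x y * (\<psi> t y - \<psi> t x)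
                                   - wgt Q (c t) y x * (\<psi> t x - \<psi> t y)))"
          unfolding e g_def using c_in[of t] t01 by simp
      qed
      then show ?thesis using gi by simp
    qed
    have CE: "(c, \<psi>) \<in> CE1 Q \<mu> \<nu>"
      unfolding CE1_def mem_Collect_eq prod.case
    proof (intro conjI allI impI ballI)
      show "continuous_on {0..1} c" using ccont by (rule continuous_on_subset) simp
      show "c t \<in> Prob" for t by (rule ct)
      show "c 0 = \<mu>" using c_in[of 0] by (simp add: cpv_0)
      show "c 1 = \<nu>" using c_in[of 1] by (simp add: cpv_1)
      show "(\<lambda>t. wgt Q (c t) x y * (\<psi> t y - \<psi> t x)) absolutely_integrable_on {0..1}" for x y
        by (rule integ)
    qed (rule CEeq)
    have act: "ennreal (action Q (c t) (\<psi> t)) * indicator {0..1} t \<le> ennreal B * indicator {0..1} t" for t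
    proof (cases "t \<in> {0<..<1}")
      case True
      then have "action Q (c t) (\<psi> t) = dir (W t) (sol (W t) x0 (bb t))"
        unfolding \<psi>_def W_def by (simp add: action_dir)
      then have "action Q (c t) (\<psi> t) \<le> B" using sol_dirB True by simp
      then show ?thesis by (auto simp: indicator_def intro: ennreal_leI)
    next
      case False
      then have "\<psi> t = (\<lambda>y. 0)" unfolding \<psi>_def by auto
      then have "action Q (c t) (\<psi> t) = 0" by (simp add: action_def)
      then show ?thesis by (simp add: indicator_def)
    qed
    have "Wass2 Q \<mu> \<nu> \<le> (\<integral>\<^sup>+ t. ennreal (action Q (fst (c, \<psi>) t) (snd (c, \<psi>) t)) * indicator {0..1} t \<partial>lborel)"
      unfolding Wass2_def by (rule INF_lower[OF CE])
    also have "\<dots> \<le> (\<integral>\<^sup>+ t. ennreal B * indicator {0..1::real} t \<partial>lborel)"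
    proof (rule nn_integral_mono)
      fix t :: real
      show "ennreal (action Q (fst (c, \<psi>) t) (snd (c, \<psi>) t)) * indicator {0..1} t \<le> ennreal B * indicator {0..1} t"
        using act[of t] by simp
    qed
    also have "\<dots> = ennreal B"
      by (simp add: nn_integral_cmult_indicator)
    finally have W2: "Wass2 Q \<mu> \<nu> \<le> ennreal B" .
    then have ntop: "Wass2 Q \<mu> \<nu> \<noteq> top" by (auto simp: top_unique)
    have "enn2real (Wass2 Q \<mu> \<nu>) \<le> enn2real (ennreal B)"
      using W2 by (intro enn2real_mono) auto
    then have e2: "enn2real (Wass2 Q \<mu> \<nu>) \<le> B" using B0 by simp
    have "sqrt (enn2real (Wass2 Q \<mu> \<nu>)) \<le> sqrt B" using e2 by simp
    also have "sqrt B < sqrt (\<epsilon>^2)" by (rule real_sqrt_less_mono[OF Beps])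
    also have "\<dots> = \<epsilon>" using \<epsilon> by simp
    finally have "sqrt (enn2real (Wass2 Q \<mu> \<nu>)) < \<epsilon>" .
    then show "Wass Q \<mu> \<nu> < ennreal \<epsilon>"
      unfolding Wass_def using ntop \<epsilon> by (simp add: ennreal_lessI)
  qed
qed

end
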